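(* Let $T$ be a skew-nontrivial tree. Then the following are equivalent: (1) $\mathrm{Z}_-(T)=1$; (2) $SD_2(T)$ is a tree; (3) $T$ is the 1-subdivision of a tree; (4) $T$ is the 1-subdivision of $SD_2(T)$.
   Context: Skew forcing: vertices are colored blue or white; if any vertex $u$ (blue or white) has exactly one white neighbor $v$, then $u$ may force $v$ to become blue; a skew forcing set is a set of initially blue vertices from which repeated forcing turns all vertices blue, and $\mathrm{Z}_-(G)$ is the minimum size of one. $B^{\emptyset}_-(T)$ is the set of vertices that become blue when the skew forcing rule is applied starting from the empty set until no more forces are possible, and $W^{\emptyset}_-(T)=V(T)\setminus B^{\emptyset}_-(T)$. The skew-nontrivial subgraph $\check G$ of $G$ is obtained by computing $B^{\emptyset}_-(G)$, then deleting each vertex of $B^{\emptyset}_-(G)$ all of whose neighbors are in $B^{\emptyset}_-(G)$, and deleting each edge with both endpoints in $B^{\emptyset}_-(G)$; $T$ is skew-nontrivial if $\check T=T$. The special distance-2 graph $SD_2(T)$ has vertex set $W^{\emptyset}_-(T)$, with $u,w$ adjacent iff $u\ne w$ and $N_T(u)\cap N_T(w)\neq\emptyset$. The 1-subdivision of a graph $H$ is obtained by inserting one new vertex on every edge of $H$. *)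

theory Defs
  imports Main
begin

type_synonym 'a graph = "'a set \<times> 'a set set"

definition verts :: "'a graph \<Rightarrow> 'a set" where "verts G = fst G"
definition edges :: "'a graph \<Rightarrow> 'a set set" where "edges G = snd G"

definition simple_graph :: "'a graph \<Rightarrow> bool" where
  "simple_graph G \<longleftrightarrow> finite (verts G) \<and> (\<forall>e\<in>edges G. e \<subseteq> verts G \<and> card e = 2)"

definition adj :: "'a graph \<Rightarrow> 'a \<Rightarrow> 'a \<Rightarrow> bool" where
  "adj G u v \<longleftrightarrow> {u, v} \<in> edges G"

definition nbhd :: "'a graph \<Rightarrow> 'a \<Rightarrow> 'a set" where
  "nbhd G u = {v \<in> verts G. adj G u v}"

definition connected_graph :: "'a graph \<Rightarrow> bool" where
  "connected_graph G \<longleftrightarrow> verts G \<noteq> {} \<and>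
     (\<forall>u\<in>verts G. \<forall>v\<in>verts G. (u, v) \<in> {(x, y). adj G x y}\<^sup>*)"

definition is_cycle :: "'a graph \<Rightarrow> 'a list \<Rightarrow> bool" where
  "is_cycle G vs \<longleftrightarrow> length vs \<ge> 3 \<and> distinct vs \<and> set vs \<subseteq> verts G \<and>
     (\<forall>i. Suc i < length vs \<longrightarrow> adj G (vs ! i) (vs ! Suc i)) \<and>
     adj G (last vs) (hd vs)"

definition acyclic_graph :: "'a graph \<Rightarrow> bool" where
  "acyclic_graph G \<longleftrightarrow> \<not> (\<exists>vs. is_cycle G vs)"

definition is_tree :: "'a graph \<Rightarrow> bool" where
  "is_tree G \<longleftrightarrow> simple_graph G \<and> connected_graph G \<and> acyclic_graph G"

text \<open>A vertex u (of any colour)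
  forces v when v is its only neighbour not (yet) blue.\<close>
inductive_set skew_closure :: "'a graph \<Rightarrow> 'a set \<Rightarrow> 'a set" for G S where
  init: "x \<in> S \<Longrightarrow> x \<in> skew_closure G S"
| force: "u \<in> verts G \<Longrightarrow> v \<in> nbhd G u \<Longrightarrow>
           (\<forall>w\<in>nbhd G u - {v}. w \<in> skew_closure G S) \<Longrightarrow> v \<in> skew_closure G S"

definition skew_forcing_set :: "'a graph \<Rightarrow> 'a set \<Rightarrow> bool" where
  "skew_forcing_set G S \<longleftrightarrow> S \<subseteq> verts G \<and> verts G \<subseteq> skew_closure G S"

definition Zminus :: "'a graph \<Rightarrow> nat" where
  "Zminus G = (LEAST k. \<exists>S. skew_forcing_set G S \<and> card S = k)"

definition Bempty :: "'a graph \<Rightarrow> 'a set" where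
  "Bempty G = skew_closure G {} \<inter> verts G"

definition Wempty :: "'a graph \<Rightarrow> 'a set" where
  "Wempty G = verts G - Bempty G"

definition skew_check :: "'a graph \<Rightarrow> 'a graph" where
  "skew_check G =
    (verts G - {v \<in> Bempty G. nbhd G v \<subseteq> Bempty G},
     edges G - {e \<in> edges G. e \<subseteq> Bempty G})"

definition skew_nontrivial :: "'a graph \<Rightarrow> bool" where
  "skew_nontrivial G \<longleftrightarrow> skew_check G = G"

definition SD2 :: "'a graph \<Rightarrow> 'a graph" where
  "SD2 T = (Wempty T,
            {{u, w} | u w. u \<in> Wempty T \<and> w \<in> Wempty T \<and> u \<noteq> w \<and>
                           nbhd T u \<inter> nbhd T w \<noteq> {}})"

definition subdivision :: "'b graph \<Rightarrow> ('b + 'b set) graph" where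
  "subdivision H = (Inl ` verts H \<union> Inr ` edges H,
                    {{Inl v, Inr e} | v e. e \<in> edges H \<and> v \<in> e})"

definition graph_iso :: "'a graph \<Rightarrow> 'b graph \<Rightarrow> bool" where
  "graph_iso G H \<longleftrightarrow> (\<exists>f. bij_betw f (verts G) (verts H) \<and>
     (\<forall>u\<in>verts G. \<forall>v\<in>verts G. adj G u v \<longleftrightarrow> adj H (f u) (f v)))"

end

theory Submission
  imports Defs
begin

lemma adj_sym: "adj G u v \<longleftrightarrow> adj G v u"
  by (simp add: adj_def insert_commute)

lemma adj_verts:
  assumes "simple_graph G" "adj G u v"
  shows "u \<in> verts G" "v \<in> verts G" "u \<noteq> v"
proof -
  have e: "{u,v} \<in> edges G" using assms(2) by (simp add: adj_def)
  then have "{u,v} \<subseteq> verts G" "card {u,v} = 2" using assms(1) by (auto simp: simple_graph_def)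
  then show "u \<in> verts G" "v \<in> verts G" "u \<noteq> v" by auto
qed

definition walk :: "('a \<times> 'a) set \<Rightarrow> 'a list \<Rightarrow> bool" where
  "walk r xs \<longleftrightarrow> (\<forall>i. Suc i < length xs \<longrightarrow> (xs ! i, xs ! Suc i) \<in> r)"

lemma rtrancl_distinct_walk:
  assumes "(x, y) \<in> r\<^sup>*"
  shows "\<exists>xs. xs \<noteq> [] \<and> hd xs = x \<and> last xs = y \<and> distinct xs \<and> walk r xs"
  using assms
proof (induction rule: rtrancl_induct)
  case base
  then show ?case by (intro exI[of _ "[x]"]) (simp add: walk_def)
next
  case (step y z)
  then obtain xs where xs: "xs \<noteq> []" "hd xs = x" "last xs = y" "distinct xs" "walk r xs" by blast
  show ?case
  proof (cases "z \<in> set xs")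
    case True
    then obtain i where i: "i < length xs" "xs ! i = z" by (auto simp: in_set_conv_nth)
    let ?ys = "take (Suc i) xs"
    have eq: "?ys = take i xs @ [z]" using i by (simp add: take_Suc_conv_app_nth)
    have "?ys \<noteq> []" using xs(1) by simp
    moreover have "hd ?ys = x" using xs(1,2) by (simp add: hd_take)
    moreover have "last ?ys = z" using eq by simp
    moreover have "distinct ?ys" using xs(4) by simp
    moreover have "walk r ?ys" using xs(5) by (simp add: walk_def)
    ultimately show ?thesis by blast
  next
    case False
    let ?ys = "xs @ [z]"
    have "walk r ?ys" unfolding walk_def
    proof (intro allI impI)
      fix i assume i: "Suc i < length ?ys"
      show "(?ys ! i, ?ys ! Suc i) \<in> r"
      proof (cases "Suc i < length xs")
        case True
        then show ?thesis using xs(5) by (simp add: walk_def nth_append)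
      next
        case False
        then have "i = length xs - 1" "Suc i = length xs" using i by auto
        then show ?thesis using xs(1,3) step(2) by (simp add: nth_append last_conv_nth)
      qed
    qed
    then show ?thesis using xs False by (intro exI[of _ ?ys]) (simp add: hd_append)
  qed
qed

lemma no_path_around:
  assumes sg: "simple_graph G" and ac: "acyclic_graph G"
    and ab: "adj G b a" and ab': "adj G b a'" and ne: "a \<noteq> a'"
    and p: "(a, a') \<in> {(x,y). adj G x y \<and> x \<noteq> b \<and> y \<noteq> b}\<^sup>*"
  shows False
proof -
  let ?R = "{(x,y). adj G x y \<and> x \<noteq> b \<and> y \<noteq> b}"
  obtain xs where xs: "xs \<noteq> []" "hd xs = a" "last xs = a'" "distinct xs" "walk ?R xs"
    using rtrancl_distinct_walk[OF p] by blast
  have len: "length xs \<ge> 2"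
  proof (cases xs)
    case Nil with xs show ?thesis by simp
  next
    case (Cons c ys) with xs ne show ?thesis by (cases ys) auto
  qed
  have mem: "xs ! i \<noteq> b \<and> xs ! i \<in> verts G" if "i < length xs" for i
  proof (cases i)
    case 0
    then have "xs ! i = a" using xs(1,2) by (simp add: hd_conv_nth)
    then show ?thesis using adj_verts[OF sg ab] by simp
  next
    case (Suc j)
    then have "(xs ! j, xs ! i) \<in> ?R" using xs(5) that unfolding walk_def by auto
    then show ?thesis using adj_verts[OF sg] by auto
  qed
  have nb: "b \<notin> set xs" using mem by (auto simp: in_set_conv_nth)
  have "is_cycle G (b # xs)"
    unfolding is_cycle_def
  proof (intro conjI)
    show "3 \<le> length (b # xs)" using len by simp
    show "distinct (b # xs)" using nb xs(4) by simp
    show "set (b # xs) \<subseteq> verts G" using mem adj_verts[OF sg ab] by (auto simp: in_set_conv_nth)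
    show "\<forall>i. Suc i < length (b # xs) \<longrightarrow> adj G ((b # xs) ! i) ((b # xs) ! Suc i)"
    proof (intro allI impI)
      fix i assume i: "Suc i < length (b # xs)"
      show "adj G ((b # xs) ! i) ((b # xs) ! Suc i)"
      proof (cases i)
        case 0
        then show ?thesis using ab xs(1,2) by (simp add: hd_conv_nth)
      next
        case (Suc j)
        then show ?thesis using xs(5) i unfolding walk_def by auto
      qed
    qed
    show "adj G (last (b # xs)) (hd (b # xs))" using xs(1,3) ab' by (simp add: adj_sym)
  qed
  with ac show False by (auto simp: acyclic_graph_def)
qed

lemma mindeg_cycle:
  assumes sg: "simple_graph G" and U: "U \<subseteq> verts G" "U \<noteq> {}"
    and deg: "\<And>x. x \<in> U \<Longrightarrow> \<exists>y z. y \<noteq> z \<and> y \<in> U \<and> z \<in> U \<and> adj G x y \<and> adj G x z"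
  shows "\<not> acyclic_graph G"
proof
  assume ac: "acyclic_graph G"
  have fin: "finite U" using sg U by (auto simp: simple_graph_def intro: finite_subset)
  have "\<exists>xs. length xs = n + 2 \<and> distinct xs \<and> set xs \<subseteq> U \<and> walk {(x,y). adj G x y} xs" for n
  proof (induction n)
    case 0
    obtain x where x: "x \<in> U" using U by auto
    then obtain y where y: "y \<in> U" "adj G x y" using deg by blast
    then have "x \<noteq> y" using adj_verts(3)[OF sg] by blast
    then show ?case using x y by (intro exI[of _ "[x,y]"]) (auto simp: walk_def less_Suc_eq)
  next
    case (Suc n)
    then obtain xs where xs: "length xs = n + 2" "distinct xs" "set xs \<subseteq> U"
      "walk {(x,y). adj G x y} xs" by blast
    define y where "y = last xs"
    define p where "p = xs ! n"
    have xsne: "xs \<noteq> []" using xs(1) by auto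
    have yl: "y = xs ! Suc n" using xs(1) xsne by (simp add: y_def last_conv_nth)
    have yU: "y \<in> U" using xs(1,3) yl by (metis lessI add_2_eq_Suc' nth_mem subsetD)
    obtain z where z: "z \<in> U" "adj G y z" "z \<noteq> p" using deg[OF yU] by metis
    show ?case
    proof (cases "z \<in> set xs")
      case False
      let ?ys = "xs @ [z]"
      have "walk {(x,y). adj G x y} ?ys" unfolding walk_def
      proof (intro allI impI)
        fix i assume i: "Suc i < length ?ys"
        show "(?ys ! i, ?ys ! Suc i) \<in> {(x,y). adj G x y}"
        proof (cases "Suc i < length xs")
          case True
          then show ?thesis using xs(4) by (simp add: walk_def nth_append)
        next
          case False
          then have "i = Suc n" using i xs(1) by auto
          then show ?thesis using xs(1) z yl by (simp add: nth_append)
        qed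
      qed
      then show ?thesis using xs False z by (intro exI[of _ ?ys]) simp
    next
      case True
      then obtain i where i: "i < length xs" "xs ! i = z" by (auto simp: in_set_conv_nth)
      have "i \<noteq> Suc n" using i yl z(2) adj_verts(3)[OF sg] by blast
      moreover have "i \<noteq> n" using i z(3) p_def by blast
      ultimately have iln: "i < n" using i xs(1) by auto
      have "is_cycle G (drop i xs)"
        unfolding is_cycle_def
      proof (intro conjI)
        show "3 \<le> length (drop i xs)" using iln xs(1) by simp
        show "distinct (drop i xs)" using xs(2) by simp
        show "set (drop i xs) \<subseteq> verts G" using xs(3) U(1) set_drop_subset[of i xs] by (meson order.trans)
        show "\<forall>j. Suc j < length (drop i xs) \<longrightarrow> adj G (drop i xs ! j) (drop i xs ! Suc j)"
        proof (intro allI impI)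
          fix j assume j: "Suc j < length (drop i xs)"
          then have "Suc (i + j) < length xs" by simp
          then have "adj G (xs ! (i + j)) (xs ! Suc (i + j))" using xs(4) unfolding walk_def by blast
          then show "adj G (drop i xs ! j) (drop i xs ! Suc j)" using j by simp
        qed
        show "adj G (last (drop i xs)) (hd (drop i xs))"
          using i iln xs(1) z(2) by (simp add: y_def hd_drop_conv_nth)
      qed
      with ac show ?thesis by (auto simp: acyclic_graph_def)
    qed
  qed
  then obtain xs where xs: "length xs = card U + 2" "distinct xs" "set xs \<subseteq> U" by blast
  then have "length xs \<le> card U" using fin by (metis card_mono distinct_card)
  with xs(1) show False by simp
qed


lemma closure_sub: "skew_closure G S \<subseteq> S \<union> verts G"
proof
  fix x assume "x \<in> skew_closure G S"
  then show "x \<in> S \<union> verts G"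
    by (induction rule: skew_closure.induct) (auto simp: nbhd_def)
qed

lemma closure_mono: assumes "S \<subseteq> S'" shows "skew_closure G S \<subseteq> skew_closure G S'"
proof
  fix x assume "x \<in> skew_closure G S"
  then show "x \<in> skew_closure G S'"
    by (induction rule: skew_closure.induct) (use assms in \<open>auto intro: skew_closure.intros\<close>)
qed

lemma nbhd_iff: "simple_graph G \<Longrightarrow> v \<in> nbhd G u \<longleftrightarrow> adj G u v"
  unfolding nbhd_def using adj_verts(2)[of G u v] by auto

lemma adj_SD2: "adj (SD2 T) x y \<longleftrightarrow> x \<in> Wempty T \<and> y \<in> Wempty T \<and> x \<noteq> y \<and>
    (\<exists>c. c \<in> nbhd T x \<and> c \<in> nbhd T y)"
  unfolding adj_def SD2_def edges_def by (auto simp: doubleton_eq_iff)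

lemma verts_SD2: "verts (SD2 T) = Wempty T"
  by (simp add: SD2_def verts_def)

lemma adj_sub: "adj (subdivision H) p q \<longleftrightarrow>
    (\<exists>v e. e \<in> edges H \<and> v \<in> e \<and> {p,q} = {Inl v, Inr e})"
  unfolding adj_def subdivision_def edges_def by auto

lemma verts_sub: "verts (subdivision H) = Inl ` verts H \<union> Inr ` edges H"
  by (simp add: subdivision_def verts_def)

locale sktree =
  fixes T :: "'a graph"
  assumes tree: "is_tree T" and snt: "skew_nontrivial T"
begin

abbreviation "VV \<equiv> verts T"
abbreviation "BB \<equiv> Bempty T"
abbreviation "WW \<equiv> Wempty T"

lemma sg: "simple_graph T" and conn: "connected_graph T" and ac: "acyclic_graph T"
  using tree by (auto simp: is_tree_def)

lemma finV: "finite VV" using sg by (simp add: simple_graph_def)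

lemma B_sub: "BB \<subseteq> VV" by (auto simp: Bempty_def)
lemma W_iff: "x \<in> WW \<longleftrightarrow> x \<in> VV \<and> x \<notin> BB" by (auto simp: Wempty_def)
lemma B_cl: "x \<in> BB \<longleftrightarrow> x \<in> skew_closure T {}"
  using closure_sub[of T "{}"] by (auto simp: Bempty_def)

lemma nb: "v \<in> nbhd T u \<longleftrightarrow> adj T u v" using nbhd_iff[OF sg] .

lemma snt_fst: "VV - {v \<in> BB. nbhd T v \<subseteq> BB} = VV"
  and snt_snd: "edges T - {e \<in> edges T. e \<subseteq> BB} = edges T"
proof -
  have "skew_check T = T" using snt by (simp add: skew_nontrivial_def)
  then have "fst (skew_check T) = fst T" "snd (skew_check T) = snd T" by simp_all
  then show "VV - {v \<in> BB. nbhd T v \<subseteq> BB} = VV" "edges T - {e \<in> edges T. e \<subseteq> BB} = edges T"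
    by (simp_all add: skew_check_def verts_def edges_def)
qed

lemma F2: assumes "x \<in> BB" "adj T x y" shows "y \<in> WW"
proof -
  have e: "{x,y} \<in> edges T" using assms(2) by (simp add: adj_def)
  have "y \<in> VV" using adj_verts[OF sg assms(2)] by simp
  moreover have "y \<notin> BB"
  proof
    assume "y \<in> BB"
    then have "{x,y} \<in> {e \<in> edges T. e \<subseteq> BB}" using e assms(1) by auto
    then show False using snt_snd e by blast
  qed
  ultimately show ?thesis by (simp add: W_iff)
qed

lemma F5a: assumes "x \<in> BB" shows "\<exists>y. adj T x y \<and> y \<in> WW"
proof -
  have "x \<in> VV" using assms B_sub by auto
  then have "\<not> nbhd T x \<subseteq> BB" using snt_fst assms by blast
  then obtain y where "y \<in> nbhd T x" "y \<notin> BB" by auto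
  then show ?thesis by (auto simp: nb W_iff nbhd_def)
qed

lemma F3: assumes "u \<in> VV" "adj T u v" "v \<in> WW"
  shows "\<exists>v'. adj T u v' \<and> v' \<noteq> v \<and> v' \<in> WW"
proof (rule ccontr)
  assume "\<not> ?thesis"
  then have "\<forall>w\<in>nbhd T u - {v}. w \<in> skew_closure T {}"
    by (auto simp: nb W_iff B_cl nbhd_def)
  moreover have "v \<in> nbhd T u" using assms(2) by (simp add: nb)
  ultimately have "v \<in> skew_closure T {}" using assms(1) by (blast intro: skew_closure.force)
  then show False using assms(3) by (simp add: B_cl W_iff)
qed

lemma F4: assumes "x \<in> WW" "adj T x y" shows "y \<in> BB"
proof (rule ccontr)
  assume yB: "y \<notin> BB"
  have yW: "y \<in> WW" using yB adj_verts[OF sg assms(2)] by (simp add: W_iff)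
  define U where "U = {x \<in> WW. \<exists>y \<in> WW. adj T x y}"
  have "\<not> acyclic_graph T"
  proof (rule mindeg_cycle[OF sg])
    show "U \<subseteq> VV" by (auto simp: U_def W_iff)
    show "U \<noteq> {}" using assms yW by (auto simp: U_def)
    fix a assume "a \<in> U"
    then obtain b where ab: "a \<in> WW" "b \<in> WW" "adj T a b" by (auto simp: U_def)
    then obtain c where c: "adj T a c" "c \<noteq> b" "c \<in> WW" using F3[of a b] by (auto simp: W_iff)
    have "b \<in> U" "c \<in> U" using ab c by (auto simp: U_def adj_sym)
    then show "\<exists>y z. y \<noteq> z \<and> y \<in> U \<and> z \<in> U \<and> adj T a y \<and> adj T a z"
      using ab c by blast
  qed
  with ac show False by simp
qed

lemma F5: assumes "x \<in> BB" shows "\<exists>y z. y \<noteq> z \<and> adj T x y \<and> adj T x z \<and> y \<in> WW \<and> z \<in> WW"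
proof -
  obtain y where y: "adj T x y" "y \<in> WW" using F5a[OF assms] by blast
  obtain z where "adj T x z" "z \<noteq> y" "z \<in> WW" using F3[OF _ y] assms B_sub by blast
  then show ?thesis using y by blast
qed

lemma W_ne: "WW \<noteq> {}"
proof -
  obtain v where v: "v \<in> VV" using conn by (auto simp: connected_graph_def)
  show ?thesis
  proof (cases "v \<in> BB")
    case True then show ?thesis using F5a by blast
  next
    case False then show ?thesis using v by (auto simp: W_iff)
  qed
qed

lemma BW_disj: "x \<in> BB \<Longrightarrow> x \<in> WW \<Longrightarrow> False" by (simp add: W_iff)

lemma SD2_simple: "simple_graph (SD2 T)"
proof -
  have "finite WW" using finV by (auto simp: Wempty_def)
  moreover have "\<forall>e\<in>edges (SD2 T). e \<subseteq> WW \<and> card e = 2"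
    by (auto simp: SD2_def edges_def)
  ultimately show ?thesis by (simp add: simple_graph_def verts_SD2)
qed

lemma SD2_conn: "connected_graph (SD2 T)"
  unfolding connected_graph_def verts_SD2
proof (intro conjI ballI)
  show "WW \<noteq> {}" by (rule W_ne)
  fix u v assume u: "u \<in> WW" and v: "v \<in> WW"
  let ?S = "{(x, y). adj (SD2 T) x y}"
  have "(u, v) \<in> {(x, y). adj T x y}\<^sup>*" using conn u v by (auto simp: connected_graph_def W_iff)
  moreover have "(x \<in> WW \<longrightarrow> (u,x) \<in> ?S\<^sup>*) \<and> (x \<in> BB \<longrightarrow> (\<forall>w. adj T x w \<longrightarrow> (u,w) \<in> ?S\<^sup>*))"
    if "(u, x) \<in> {(x, y). adj T x y}\<^sup>*" for x
    using that
  proof (induction rule: rtrancl_induct)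
    case base
    then show ?case using u BW_disj by auto
  next
    case (step y z)
    have yz: "adj T y z" using step(2) by simp
    show ?case
    proof (intro conjI impI allI)
      assume zW: "z \<in> WW"
      then have "y \<in> BB" using F4 yz by (simp add: adj_sym)
      then show "(u, z) \<in> ?S\<^sup>*" using step(3) yz by blast
    next
      fix w assume zB: "z \<in> BB" and zw: "adj T z w"
      have yW: "y \<in> WW" using F2[OF zB] yz by (simp add: adj_sym)
      then have uy: "(u, y) \<in> ?S\<^sup>*" using step(3) by blast
      show "(u, w) \<in> ?S\<^sup>*"
      proof (cases "w = y")
        case True then show ?thesis using uy by simp
      next
        case False
        have "adj (SD2 T) y w" unfolding adj_SD2
          using yW F2[OF zB zw] False yz zw by (auto simp: nb adj_sym)
        then show ?thesis using uy by (simp add: rtrancl.rtrancl_into_rtrancl)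
      qed
    qed
  qed
  ultimately show "(u, v) \<in> ?S\<^sup>*" using v by blast
qed


definition Pdeg :: bool where
  "Pdeg \<longleftrightarrow> (\<forall>b\<in>BB. \<forall>x y z. adj T b x \<and> adj T b y \<and> adj T b z \<longrightarrow> x = y \<or> y = z \<or> x = z)"

lemma P_nbhd: assumes P: Pdeg and b: "b \<in> BB"
  shows "\<exists>u w. u \<noteq> w \<and> u \<in> WW \<and> w \<in> WW \<and> nbhd T b = {u, w}"
proof -
  obtain y z where yz: "y \<noteq> z" "adj T b y" "adj T b z" "y \<in> WW" "z \<in> WW" using F5[OF b] by blast
  have "nbhd T b = {y, z}"
  proof (intro equalityI subsetI)
    fix x assume "x \<in> nbhd T b"
    then have "adj T b x" by (simp add: nb)
    then have "x = y \<or> y = z \<or> x = z" using P b yz unfolding Pdeg_def by blast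
    then show "x \<in> {y, z}" using yz by auto
  qed (use yz in \<open>auto simp: nb\<close>)
  then show ?thesis using yz by blast
qed

lemma P_common: assumes P: Pdeg and c: "c \<in> BB" and "adj T c u" "adj T c w" "u \<noteq> w"
  shows "nbhd T c = {u, w}"
proof -
  obtain p q where pq: "p \<noteq> q" "nbhd T c = {p, q}" using P_nbhd[OF P c] by blast
  have "u \<in> {p,q}" "w \<in> {p,q}" using assms pq by (auto simp: nb[symmetric])
  then show ?thesis using pq assms(5) by auto
qed

lemma notP_SD2_cyclic: assumes "\<not> Pdeg" shows "\<not> acyclic_graph (SD2 T)"
proof -
  obtain b x y z where b: "b \<in> BB" "adj T b x" "adj T b y" "adj T b z" "x \<noteq> y" "y \<noteq> z" "x \<noteq> z"
    using assms unfolding Pdeg_def by blast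
  have W: "x \<in> WW" "y \<in> WW" "z \<in> WW" using F2 b by auto
  have a1: "adj (SD2 T) x y" "adj (SD2 T) y z" "adj (SD2 T) z x"
    unfolding adj_SD2 using W b by (auto simp: nb adj_sym)
  have "is_cycle (SD2 T) [x, y, z]"
    unfolding is_cycle_def
  proof (intro conjI)
    show "\<forall>i. Suc i < length [x, y, z] \<longrightarrow> adj (SD2 T) ([x, y, z] ! i) ([x, y, z] ! Suc i)"
    proof (intro allI impI)
      fix i assume "Suc i < length [x, y, z]"
      then have "i = 0 \<or> i = 1" by auto
      then show "adj (SD2 T) ([x, y, z] ! i) ([x, y, z] ! Suc i)" using a1 by auto
    qed
  qed (use W b a1 in \<open>auto simp: verts_SD2\<close>)
  then show ?thesis by (auto simp: acyclic_graph_def)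
qed

lemma P_SD2_acyclic: assumes P: Pdeg shows "acyclic_graph (SD2 T)"
  unfolding acyclic_graph_def
proof
  assume "\<exists>vs. is_cycle (SD2 T) vs"
  then obtain vs where cyc: "is_cycle (SD2 T) vs" by blast
  define n where "n = length vs"
  have n3: "n \<ge> 3" and dist: "distinct vs" and sv: "set vs \<subseteq> WW"
    and cons: "\<And>i. Suc i < n \<Longrightarrow> adj (SD2 T) (vs ! i) (vs ! Suc i)"
    and lh: "adj (SD2 T) (last vs) (hd vs)"
    using cyc by (auto simp: is_cycle_def n_def verts_SD2)
  have vsW: "i < n \<Longrightarrow> vs ! i \<in> WW" for i using sv n_def by auto
  obtain c where c: "c \<in> nbhd T (vs ! 0)" "c \<in> nbhd T (vs ! 1)"
    using cons[of 0] n3 unfolding adj_SD2 by auto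
  have cB: "c \<in> BB" using c(1) vsW[of 0] n3 F4 by (auto simp: nb)
  have l0: "0 < length vs" and l1: "1 < length vs" using n3 n_def by auto
  have ne01: "vs ! 0 \<noteq> vs ! 1" using nth_eq_iff_index_eq[OF dist l0 l1] by simp
  have nc: "nbhd T c = {vs ! 0, vs ! 1}"
    using P_common[OF P cB _ _ ne01] c by (simp add: nb adj_sym)
  let ?R = "{(x,y). adj T x y \<and> x \<noteq> c \<and> y \<noteq> c}"
  have stepR: "(p, q) \<in> ?R\<^sup>*" if pq: "adj (SD2 T) p q" and nsub: "\<not> {p, q} \<subseteq> {vs ! 0, vs ! 1}" for p q
  proof -
    obtain d where d: "adj T p d" "adj T q d" "p \<in> WW" "q \<in> WW"
      using pq unfolding adj_SD2 by (auto simp: nb)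
    have "d \<noteq> c"
    proof
      assume "d = c"
      then have "p \<in> nbhd T c" "q \<in> nbhd T c" using d by (auto simp: nb adj_sym)
      then show False using nsub nc by auto
    qed
    moreover have "p \<noteq> c" "q \<noteq> c" using d cB BW_disj by auto
    ultimately have "(p, d) \<in> ?R" "(d, q) \<in> ?R" using d by (auto simp: adj_sym)
    then show ?thesis by (meson converse_rtrancl_into_rtrancl r_into_rtrancl)
  qed
  have notin: "vs ! j \<notin> {vs ! 0, vs ! 1}" if "2 \<le> j" "j < n" for j
    using that nth_eq_iff_index_eq[OF dist, of j 0] nth_eq_iff_index_eq[OF dist, of j 1] l0 l1 n_def by auto
  have reach: "(vs ! 1, vs ! j) \<in> ?R\<^sup>*" if "1 \<le> j" "j < n" for j
    using that
  proof (induction j)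
    case 0 then show ?case by simp
  next
    case (Suc j)
    show ?case
    proof (cases "j = 0")
      case True then show ?thesis by simp
    next
      case False
      then have "(vs ! 1, vs ! j) \<in> ?R\<^sup>*" using Suc by simp
      moreover have "(vs ! j, vs ! Suc j) \<in> ?R\<^sup>*"
        using stepR[OF cons[OF Suc.prems(2)]] notin[of "Suc j"] Suc.prems False by auto
      ultimately show ?thesis by (rule rtrancl_trans)
    qed
  qed
  have ln: "last vs = vs ! (n - 1)" "hd vs = vs ! 0" using l0 n_def by (auto simp: last_conv_nth hd_conv_nth)
  have "(vs ! (n - 1), vs ! 0) \<in> ?R\<^sup>*"
    using stepR[of "vs ! (n - 1)" "vs ! 0"] lh ln notin[of "n - 1"] n3 by auto
  moreover have "(vs ! 1, vs ! (n - 1)) \<in> ?R\<^sup>*" using reach[of "n - 1"] n3 by simp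
  ultimately have r10: "(vs ! 1, vs ! 0) \<in> ?R\<^sup>*" by (rule rtrancl_trans[rotated])
  have "adj T c (vs ! 1)" "adj T c (vs ! 0)" using nc by (auto simp: nb[symmetric])
  then show False using no_path_around[OF sg ac _ _ _ r10] ne01 by auto
qed


lemma forcing_V: "skew_forcing_set T VV"
  by (auto simp: skew_forcing_set_def intro: skew_closure.init)

lemma no_forcing0: assumes "skew_forcing_set T S" shows "card S \<noteq> 0"
proof
  assume c: "card S = 0"
  have "finite S" using assms finV by (auto simp: skew_forcing_set_def intro: finite_subset)
  then have "S = {}" using c by simp
  then have "VV \<subseteq> skew_closure T {}" using assms by (simp add: skew_forcing_set_def)
  then have "WW = {}" by (auto simp: W_iff B_cl)
  then show False using W_ne by simp
qed

lemma Zminus_P: assumes P: Pdeg shows "Zminus T = 1"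
proof -
  obtain w where w: "w \<in> WW" using W_ne by blast
  let ?S = "{(x, y). adj (SD2 T) x y}"
  have Bin: "BB \<subseteq> skew_closure T {w}" using closure_mono[of "{}" "{w}" T] by (auto simp: B_cl)
  have "x \<in> skew_closure T {w}" if "(w, x) \<in> ?S\<^sup>*" for x
    using that
  proof (induction rule: rtrancl_induct)
    case base then show ?case by (auto intro: skew_closure.init)
  next
    case (step y z)
    then have yz: "adj (SD2 T) y z" by simp
    then obtain c where c: "adj T y c" "adj T z c" "y \<in> WW" "z \<in> WW" "y \<noteq> z"
      unfolding adj_SD2 by (auto simp: nb)
    have cB: "c \<in> BB" using F4 c by blast
    have nc: "nbhd T c = {y, z}" using P_common[OF P cB] c by (simp add: adj_sym)
    have "c \<in> VV" using cB B_sub by auto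
    moreover have "z \<in> nbhd T c" using nc by simp
    moreover have "\<forall>w'\<in>nbhd T c - {z}. w' \<in> skew_closure T {w}" using nc step(3) by auto
    ultimately show ?case by (rule skew_closure.force)
  qed
  moreover have "(w, x) \<in> ?S\<^sup>*" if "x \<in> WW" for x
    using SD2_conn w that unfolding connected_graph_def verts_SD2 by blast
  ultimately have "VV \<subseteq> skew_closure T {w}" using Bin by (auto simp: W_iff)
  then have f1: "skew_forcing_set T {w}" using w by (auto simp: skew_forcing_set_def W_iff)
  show ?thesis unfolding Zminus_def
  proof (rule Least_equality)
    show "\<exists>S. skew_forcing_set T S \<and> card S = 1" using f1 by (intro exI[of _ "{w}"]) simp
    fix k assume "\<exists>S. skew_forcing_set T S \<and> card S = k"
    then show "1 \<le> k" using no_forcing0 by fastforce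
  qed
qed

lemma R_sym:
  assumes "(x, y) \<in> {(x,y). adj T x y \<and> x \<noteq> b \<and> y \<noteq> b}\<^sup>*"
  shows "(y, x) \<in> {(x,y). adj T x y \<and> x \<noteq> b \<and> y \<noteq> b}\<^sup>*"
proof -
  let ?R = "{(x,y). adj T x y \<and> x \<noteq> b \<and> y \<noteq> b}"
  have "?R\<inverse> = ?R" by (auto simp: converse_def adj_sym)
  then show ?thesis using rtrancl_converseI[OF assms] by simp
qed

lemma not_forcing_single:
  assumes b: "b \<in> BB" and p: "adj T b p" and q: "adj T b q" and pq: "p \<noteq> q"
    and sp: "(p, s) \<notin> {(x,y). adj T x y \<and> x \<noteq> b \<and> y \<noteq> b}\<^sup>*"
    and sq: "(q, s) \<notin> {(x,y). adj T x y \<and> x \<noteq> b \<and> y \<noteq> b}\<^sup>*"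
  shows "\<not> skew_forcing_set T {s}"
proof
  assume f: "skew_forcing_set T {s}"
  let ?R = "{(x,y). adj T x y \<and> x \<noteq> b \<and> y \<noteq> b}"
  define Y where "Y = {x \<in> WW. (p, x) \<in> ?R\<^sup>* \<or> (q, x) \<in> ?R\<^sup>*}"
  have pW: "p \<in> WW" and qW: "q \<in> WW" using F2 b p q by auto
  have "x \<notin> Y" if "x \<in> skew_closure T {s}" for x
    using that
  proof (induction rule: skew_closure.induct)
    case (init x) then show ?case using sp sq by (auto simp: Y_def)
  next
    case (force u v)
    show ?case
    proof
      assume vY: "v \<in> Y"
      have IH: "\<And>w'. adj T u w' \<Longrightarrow> w' \<noteq> v \<Longrightarrow> w' \<notin> Y" using force.IH by (auto simp: nb)
      have uv: "adj T u v" using force.hyps(2) by (simp add: nb)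
      show False
      proof (cases "u = b")
        case True
        have "p \<in> Y" "q \<in> Y" using pW qW by (auto simp: Y_def)
        then show False using IH[of p] IH[of q] p q pq True by auto
      next
        case False
        have vW: "v \<in> WW" using vY by (simp add: Y_def)
        have uB: "u \<in> BB" using F4[OF vW] uv by (simp add: adj_sym)
        have vb: "v \<noteq> b" using vW b BW_disj by auto
        obtain v' where v': "adj T u v'" "v' \<noteq> v" "v' \<in> WW" using F5[OF uB] by metis
        have v'b: "v' \<noteq> b" using v' b BW_disj by auto
        have "(v, u) \<in> ?R" "(u, v') \<in> ?R" using uv v' vb v'b False by (auto simp: adj_sym)
        then have "(v, v') \<in> ?R\<^sup>*" by (meson converse_rtrancl_into_rtrancl r_into_rtrancl)
        then have "v' \<in> Y" using vY v' unfolding Y_def by (auto intro: rtrancl_trans)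
        then show False using IH v' by blast
      qed
    qed
  qed
  moreover have "p \<in> Y" using pW by (simp add: Y_def)
  moreover have "p \<in> skew_closure T {s}" using f pW by (auto simp: skew_forcing_set_def W_iff)
  ultimately show False by blast
qed

lemma P_of_Zminus: assumes Z: "Zminus T = 1" shows Pdeg
proof (rule ccontr)
  assume "\<not> Pdeg"
  then obtain b x y z where b: "b \<in> BB" "adj T b x" "adj T b y" "adj T b z" "x \<noteq> y" "y \<noteq> z" "x \<noteq> z"
    unfolding Pdeg_def by blast
  have "\<exists>S. skew_forcing_set T S \<and> card S = (LEAST k. \<exists>S. skew_forcing_set T S \<and> card S = k)"
    by (rule LeastI_ex) (use forcing_V in blast)
  then obtain S where S: "skew_forcing_set T S" "card S = 1" using Z by (auto simp: Zminus_def)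
  then obtain s where s: "S = {s}" by (auto simp: card_Suc_eq)
  let ?R = "{(x,y). adj T x y \<and> x \<noteq> b \<and> y \<noteq> b}"
  have two: False if "(a, s) \<in> ?R\<^sup>*" "(a', s) \<in> ?R\<^sup>*" "adj T b a" "adj T b a'" "a \<noteq> a'" for a a'
  proof -
    have "(a, a') \<in> ?R\<^sup>*" using that(1) R_sym[OF that(2)] by (rule rtrancl_trans)
    then show False using no_path_around[OF sg ac that(3,4,5)] by blast
  qed
  show False
  proof (cases "(x, s) \<in> ?R\<^sup>*")
    case True
    then have "(y, s) \<notin> ?R\<^sup>*" "(z, s) \<notin> ?R\<^sup>*" using two b by blast+
    then show False using not_forcing_single[OF b(1) b(3) b(4) b(6)] S s by simp
  next
    case nx: False
    show False
    proof (cases "(y, s) \<in> ?R\<^sup>*")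
      case True
      then have "(z, s) \<notin> ?R\<^sup>*" using two b by blast
      then show False using not_forcing_single[OF b(1) b(2) b(4) b(7)] nx S s by simp
    next
      case False
      then show False using not_forcing_single[OF b(1) b(2) b(3) b(5)] nx S s by simp
    qed
  qed
qed


lemma nbhd_in_SD2: assumes P: Pdeg and b: "b \<in> BB" shows "nbhd T b \<in> edges (SD2 T)"
proof -
  obtain u w where uw: "u \<noteq> w" "u \<in> WW" "w \<in> WW" "nbhd T b = {u, w}" using P_nbhd[OF P b] by blast
  have "u \<in> nbhd T b" "w \<in> nbhd T b" using uw by auto
  then have "adj T b u" "adj T b w" by (simp_all add: nb)
  then have "b \<in> nbhd T u \<and> b \<in> nbhd T w" by (simp add: nb adj_sym)
  then have "adj (SD2 T) u w" using uw unfolding adj_SD2 by blast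
  then show ?thesis using uw by (simp add: adj_def)
qed

lemma P_iso: assumes P: Pdeg shows "graph_iso T (subdivision (SD2 T))"
proof -
  define f where "f x = (if x \<in> BB then Inr (nbhd T x) else Inl x)" for x
  have inj: "inj_on f VV"
  proof (rule inj_onI)
    fix x y assume x: "x \<in> VV" and y: "y \<in> VV" and e: "f x = f y"
    show "x = y"
    proof (cases "x \<in> BB")
      case xB: True
      show ?thesis
      proof (cases "y \<in> BB")
        case yB: True
        then have ne: "nbhd T x = nbhd T y" using xB e by (simp add: f_def)
        obtain u w where uw: "u \<noteq> w" "u \<in> WW" "w \<in> WW" "nbhd T x = {u, w}"
          using P_nbhd[OF P xB] by blast
        show ?thesis
        proof (rule ccontr)
          assume xy: "x \<noteq> y"
          have a: "adj T x u" "adj T x w" "adj T y u" "adj T y w" using uw ne by (auto simp: nb[symmetric])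
          have "is_cycle T [u, x, w, y]"
            unfolding is_cycle_def
          proof (intro conjI)
            show "\<forall>i. Suc i < length [u, x, w, y] \<longrightarrow> adj T ([u, x, w, y] ! i) ([u, x, w, y] ! Suc i)"
            proof (intro allI impI)
              fix i assume "Suc i < length [u, x, w, y]"
              then have "i = 0 \<or> i = 1 \<or> i = 2" by auto
              then show "adj T ([u, x, w, y] ! i) ([u, x, w, y] ! Suc i)" using a by (auto simp: adj_sym)
            qed
          qed (use uw xB yB xy x y a BW_disj in \<open>auto simp: adj_sym W_iff\<close>)
          then show False using ac by (auto simp: acyclic_graph_def)
        qed
      next
        case False then show ?thesis using xB e by (simp add: f_def)
      qed
    next
      case False then show ?thesis using e by (auto simp: f_def split: if_splits)
    qed
  qed
  have img: "f ` VV = verts (subdivision (SD2 T))"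
  proof (intro equalityI subsetI)
    fix y assume "y \<in> f ` VV"
    then obtain x where x: "x \<in> VV" "y = f x" by blast
    then show "y \<in> verts (subdivision (SD2 T))"
      using nbhd_in_SD2[OF P] by (auto simp: f_def verts_sub verts_SD2 W_iff)
  next
    fix y assume "y \<in> verts (subdivision (SD2 T))"
    then consider (l) w where "w \<in> WW" "y = Inl w" | (r) e where "e \<in> edges (SD2 T)" "y = Inr e"
      by (auto simp: verts_sub verts_SD2)
    then show "y \<in> f ` VV"
    proof cases
      case l then show ?thesis by (auto simp: f_def W_iff intro!: image_eqI[of _ _ w])
    next
      case r
      have "\<exists>u w. e = {u,w} \<and> u \<in> WW \<and> w \<in> WW \<and> u \<noteq> w \<and> nbhd T u \<inter> nbhd T w \<noteq> {}"
        using r(1) by (simp add: SD2_def edges_def)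
      then obtain u w c where uw: "e = {u, w}" and c: "c \<in> nbhd T u" "c \<in> nbhd T w" "u \<in> WW" "w \<in> WW" "u \<noteq> w"
        by blast
      then have c: "adj T u c" "adj T w c" "u \<in> WW" "w \<in> WW" "u \<noteq> w" by (simp_all add: nb)
      have cB: "c \<in> BB" using F4 c by blast
      have "nbhd T c = e" using P_common[OF P cB] c uw by (simp add: adj_sym)
      then have "f c = y" using cB r by (simp add: f_def)
      then show ?thesis using cB B_sub by blast
    qed
  qed
  have adjp: "adj T x y \<longleftrightarrow> adj (subdivision (SD2 T)) (f x) (f y)" if x: "x \<in> VV" and y: "y \<in> VV" for x y
  proof (cases "x \<in> BB")
    case xB: True
    show ?thesis
    proof (cases "y \<in> BB")
      case yB: True
      then show ?thesis using xB F2[OF xB, of y] BW_disj by (auto simp: f_def adj_sub)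
    next
      case yW: False
      have "adj (subdivision (SD2 T)) (f x) (f y) \<longleftrightarrow> y \<in> nbhd T x"
        using xB yW nbhd_in_SD2[OF P xB] by (auto simp: f_def adj_sub doubleton_eq_iff)
      then show ?thesis by (simp add: nb)
    qed
  next
    case xW: False
    show ?thesis
    proof (cases "y \<in> BB")
      case yB: True
      have "adj (subdivision (SD2 T)) (f x) (f y) \<longleftrightarrow> x \<in> nbhd T y"
        using yB xW nbhd_in_SD2[OF P yB] by (auto simp: f_def adj_sub doubleton_eq_iff)
      then show ?thesis by (simp add: nb adj_sym)
    next
      case yW: False
      have "\<not> adj T x y" using F4[of x y] xW yW x by (auto simp: W_iff)
      then show ?thesis using xW yW by (auto simp: f_def adj_sub doubleton_eq_iff)
    qed
  qed
  show ?thesis unfolding graph_iso_def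
    using inj img adjp by (intro exI[of _ f]) (auto simp: bij_betw_def)
qed

lemma iso_P: assumes sH: "simple_graph H" and iso: "graph_iso T (subdivision H)" shows Pdeg
proof (rule ccontr)
  assume "\<not> Pdeg"
  then obtain b x y z where b: "b \<in> BB" "adj T b x" "adj T b y" "adj T b z" "x \<noteq> y" "y \<noteq> z" "x \<noteq> z"
    unfolding Pdeg_def by blast
  obtain f where bij: "bij_betw f VV (verts (subdivision H))"
    and ap: "\<And>u v. u \<in> VV \<Longrightarrow> v \<in> VV \<Longrightarrow> adj T u v \<longleftrightarrow> adj (subdivision H) (f u) (f v)"
    using iso unfolding graph_iso_def by blast
  have inj: "inj_on f VV" and img: "f ` VV = verts (subdivision H)" using bij by (auto simp: bij_betw_def)
  have bV: "b \<in> VV" using b B_sub by auto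
  have xyzV: "x \<in> VV" "y \<in> VV" "z \<in> VV" using b adj_verts[OF sg] by blast+
  have sideflip: "(p \<in> range Inl) \<longleftrightarrow> (q \<notin> range Inl)" if "adj (subdivision H) p q" for p q
    using that by (auto simp: adj_sub doubleton_eq_iff)
  have fb: "f b \<in> range Inl"
  proof (rule ccontr)
    assume "f b \<notin> range Inl"
    then obtain e where e: "f b = Inr e" by (cases "f b") auto
    have "f a \<in> Inl ` e" if "adj T b a" "a \<in> VV" for a
    proof -
      have "adj (subdivision H) (Inr e) (f a)" using ap[OF bV that(2)] that(1) e by simp
      then show ?thesis by (auto simp: adj_sub doubleton_eq_iff)
    qed
    then have sub: "f ` {x, y, z} \<subseteq> Inl ` e" using b xyzV by auto
    have eE: "e \<in> edges H"
      using ap[OF bV xyzV(1)] b(2) e by (auto simp: adj_sub doubleton_eq_iff)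
    then have ce: "card e = 2" using sH by (auto simp: simple_graph_def)
    then have fe: "finite e" by (metis card.infinite zero_neq_numeral)
    have "inj_on f {x, y, z}" using inj_on_subset[OF inj, of "{x, y, z}"] xyzV by auto
    then have "card (f ` {x, y, z}) = card {x, y, z}" by (rule card_image)
    also have "\<dots> = 3" using b(5-7) by simp
    finally have "card (f ` {x, y, z}) = 3" .
    moreover have "card (f ` {x, y, z}) \<le> card e"
      using le_trans[OF card_mono[OF finite_imageI[OF fe] sub] card_image_le[OF fe]] by simp
    ultimately show False using ce by simp
  qed
  have side: "u \<in> BB \<longleftrightarrow> f u \<in> range Inl" if "(b, u) \<in> {(x, y). adj T x y}\<^sup>*" for u
    using that
  proof (induction rule: rtrancl_induct)
    case base then show ?case using b fb by simp
  next
    case (step u v)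
    have uv: "adj T u v" using step(2) by simp
    have V: "u \<in> VV" "v \<in> VV" using adj_verts[OF sg uv] by auto
    have "u \<in> BB \<longleftrightarrow> v \<notin> BB"
      using F2[of u v] F4[of u v] uv V by (auto simp: W_iff)
    moreover have "f u \<in> range Inl \<longleftrightarrow> f v \<notin> range Inl" using sideflip ap[OF V] uv by blast
    ultimately show ?case using step(3) by blast
  qed
  have "\<not> acyclic_graph T"
  proof (rule mindeg_cycle[OF sg order.refl])
    show "VV \<noteq> {}" using bV by blast
    fix u assume u: "u \<in> VV"
    show "\<exists>y z. y \<noteq> z \<and> y \<in> VV \<and> z \<in> VV \<and> adj T u y \<and> adj T u z"
    proof (cases "u \<in> BB")
      case True
      then show ?thesis using F5 adj_verts[OF sg] by metis
    next
      case False
      have "(b, u) \<in> {(x, y). adj T x y}\<^sup>*" using conn bV u by (auto simp: connected_graph_def)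
      then have "f u \<notin> range Inl" using side False by blast
      moreover have "f u \<in> verts (subdivision H)" using img u by blast
      ultimately obtain e where e: "f u = Inr e" "e \<in> edges H" by (auto simp: verts_sub)
      then have "card e = 2" "e \<subseteq> verts H" using sH by (auto simp: simple_graph_def)
      then obtain p q where pq: "e = {p, q}" "p \<noteq> q" by (auto simp: card_2_iff)
      have pqV: "Inl p \<in> verts (subdivision H)" "Inl q \<in> verts (subdivision H)"
        using pq \<open>e \<subseteq> verts H\<close> by (auto simp: verts_sub)
      obtain y' where y': "y' \<in> VV" "f y' = Inl p" using pqV(1) img by (metis imageE)
      obtain z' where z': "z' \<in> VV" "f z' = Inl q" using pqV(2) img by (metis imageE)
      have "y' \<noteq> z'" using y' z' pq by auto
      moreover have "adj T u y'" "adj T u z'"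
        using ap[OF u y'(1)] ap[OF u z'(1)] e y' z' pq by (auto simp: adj_sub)
      ultimately show ?thesis using y' z' by blast
    qed
  qed
  then show False using ac by simp
qed

end

theorem theorem6p9:
  fixes T :: "'a graph"
  assumes "is_tree T" and "skew_nontrivial T"
  shows "(Zminus T = 1 \<longleftrightarrow> is_tree (SD2 T)) \<and>
         (is_tree (SD2 T) \<longleftrightarrow> (\<exists>H :: 'a graph. is_tree H \<and> graph_iso T (subdivision H))) \<and>
         ((\<exists>H :: 'a graph. is_tree H \<and> graph_iso T (subdivision H)) \<longleftrightarrow>
            graph_iso T (subdivision (SD2 T)))"
proof -
  interpret sktree T using assms by unfold_locales
  have t: "is_tree (SD2 T) \<longleftrightarrow> Pdeg"
    using SD2_simple SD2_conn P_SD2_acyclic notP_SD2_cyclic by (auto simp: is_tree_def)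
  have z: "Zminus T = 1 \<longleftrightarrow> Pdeg" using Zminus_P P_of_Zminus by blast
  have h: "(\<exists>H :: 'a graph. is_tree H \<and> graph_iso T (subdivision H)) \<longleftrightarrow> Pdeg"
  proof
    assume "\<exists>H :: 'a graph. is_tree H \<and> graph_iso T (subdivision H)"
    then show Pdeg using iso_P by (auto simp: is_tree_def)
  next
    assume P: Pdeg
    then show "\<exists>H :: 'a graph. is_tree H \<and> graph_iso T (subdivision H)"
      using t P_iso by blast
  qed
  have i: "graph_iso T (subdivision (SD2 T)) \<longleftrightarrow> Pdeg"
    using iso_P[OF SD2_simple] P_iso by blast
  show ?thesis using t z h i by blast
qed

end
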